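(* Let $n\ge2$, $1\le i\le n-1$ and $R>0$. Then $D^n_{i,R}$ is a Banach space with respect to $\|\cdot\|$. In particular, $D^n_{i,R}$ is the completion of $C_c([0,\infty))\cap D^n_{i,R}$ with respect to $\|\cdot\|$.
   Context: $C_b(0,\infty)$ = continuous functions on $(0,\infty)$ with support bounded from above. $D^n_i=\{\zeta\in C_b(0,\infty):\lim_{t\to0}t^{n-i}\zeta(t)=0,\ \lim_{t\to0}\int_t^\infty\zeta(s)s^{n-i-1}ds\text{ exists and is finite}\}$; $D^n_{i,R}=\{\zeta\in D^n_i:\mathrm{supp}\,\zeta\subset(0,R]\}$. Elements of $C_c([0,\infty))$ are regarded as functions on $(0,\infty)$ by restriction. The norm is $\|\zeta\|=\sup_{t>0}\left|(n-i)\int_t^\infty\zeta(s)s^{n-i-1}ds\right|+\sup_{t>0}\left|t^{n-i}\zeta(t)+(n-i)\int_t^\infty\zeta(s)s^{n-i-1}ds\right|$. *)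

theory Defs
  imports "HOL-Analysis.Analysis"
begin

text \<open>Functions on (0,infinity) are represented as functions real => real that vanish
  on (-infinity,0] (extension by zero), so that the norm separates points.\<close>

definition Cb :: "(real \<Rightarrow> real) set" where
  "Cb = {\<zeta>. continuous_on {0<..} \<zeta> \<and> (\<exists>M. \<forall>t>M. \<zeta> t = 0) \<and> (\<forall>t\<le>0. \<zeta> t = 0)}"

definition tailint :: "nat \<Rightarrow> nat \<Rightarrow> (real \<Rightarrow> real) \<Rightarrow> real \<Rightarrow> real" where
  "tailint n i \<zeta> t = integral {t..} (\<lambda>s. \<zeta> s * s ^ (n - i - 1))"

definition Dni :: "nat \<Rightarrow> nat \<Rightarrow> (real \<Rightarrow> real) set" where
  "Dni n i = {\<zeta>\<in>Cb. ((\<lambda>t. t ^ (n - i) * \<zeta> t) \<longlongrightarrow> 0) (at_right 0)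
      \<and> (\<exists>L. (tailint n i \<zeta> \<longlongrightarrow> L) (at_right 0))}"

definition DniR :: "nat \<Rightarrow> nat \<Rightarrow> real \<Rightarrow> (real \<Rightarrow> real) set" where
  "DniR n i R = {\<zeta>\<in>Dni n i. \<forall>t>R. \<zeta> t = 0}"

text \<open>Restrictions to (0,infinity) of functions in C_c([0,infinity)).\<close>
definition Cc0 :: "(real \<Rightarrow> real) set" where
  "Cc0 = {\<zeta>. \<exists>g. continuous_on {0..} g \<and> (\<exists>M. \<forall>t\<ge>M. g t = 0) \<and> (\<forall>t>0. \<zeta> t = g t)}"

definition dnorm :: "nat \<Rightarrow> nat \<Rightarrow> (real \<Rightarrow> real) \<Rightarrow> real" where
  "dnorm n i \<zeta> =
     (SUP t\<in>{0<..}. \<bar>real (n - i) * tailint n i \<zeta> t\<bar>)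
   + (SUP t\<in>{0<..}. \<bar>t ^ (n - i) * \<zeta> t + real (n - i) * tailint n i \<zeta> t\<bar>)"

end

theory Submission
  imports Defs
begin

lemma cb_tail:
  assumes f: "f \<in> Cb" and t: "0 < t" "t \<le> b" and z: "\<forall>s>b. f s = 0"
  shows "(\<lambda>s. f s * s ^ k) integrable_on {t..}"
    and "integral {t..} (\<lambda>s. f s * s ^ k) = integral {t..b} (\<lambda>s. f s * s ^ k)"
proof -
  have c: "continuous_on {0<..} f" using f by (simp add: Cb_def)
  have "continuous_on {t..b} (\<lambda>s. f s * s ^ k)"
    by (intro continuous_intros continuous_on_subset[OF c]) (use t in auto)
  then have "((\<lambda>s. f s * s ^ k) has_integral integral {t..b} (\<lambda>s. f s * s ^ k)) {t..b}"
    using integrable_continuous_real by blast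
  then have h: "((\<lambda>x. if x \<in> {t..b} then f x * x ^ k else 0) has_integral integral {t..b} (\<lambda>s. f s * s ^ k)) UNIV"
    by (simp only: has_integral_restrict_UNIV)
  have e: "(\<lambda>x. if x \<in> {t..b} then f x * x ^ k else 0) = (\<lambda>x. if x \<in> {t..} then f x * x ^ k else 0)"
    using z by (auto intro!: ext)
  have "((\<lambda>s. f s * s ^ k) has_integral integral {t..b} (\<lambda>s. f s * s ^ k)) {t..}"
    using h unfolding e by (simp only: has_integral_restrict_UNIV)
  then show "(\<lambda>s. f s * s ^ k) integrable_on {t..}"
    and "integral {t..} (\<lambda>s. f s * s ^ k) = integral {t..b} (\<lambda>s. f s * s ^ k)"
    by (auto simp: integrable_on_def integral_unique)
qed

lemma cb_integrable:
  assumes f: "f \<in> Cb" and t: "0 < t"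
  shows "(\<lambda>s. f s * s ^ k) integrable_on {t..}"
proof -
  obtain M where M: "\<forall>s>M. f s = 0" using f by (auto simp: Cb_def)
  have "\<forall>s>max t M. f s = 0" using M by auto
  then show ?thesis using cb_tail(1)[OF f t, of "max t M"] by auto
qed

lemma tailint_add:
  assumes "f \<in> Cb" "g \<in> Cb" "0 < t"
  shows "tailint n i (\<lambda>s. f s + g s) t = tailint n i f t + tailint n i g t"
  unfolding tailint_def
  using integral_add[OF cb_integrable[OF assms(1,3)] cb_integrable[OF assms(2,3)]]
  by (simp add: distrib_right)

lemma tailint_diff:
  assumes "f \<in> Cb" "g \<in> Cb" "0 < t"
  shows "tailint n i (\<lambda>s. f s - g s) t = tailint n i f t - tailint n i g t"
  unfolding tailint_def
  using integral_diff[OF cb_integrable[OF assms(1,3)] cb_integrable[OF assms(2,3)]]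
  by (simp add: left_diff_distrib)

lemma tailint_scale:
  "tailint n i (\<lambda>s. c * f s) t = c * tailint n i f t"
  unfolding tailint_def by (simp add: mult.assoc)

lemma tailint_zero: "tailint n i (\<lambda>s. 0) t = 0"
  unfolding tailint_def by simp

lemma Cb_add: "f \<in> Cb \<Longrightarrow> g \<in> Cb \<Longrightarrow> (\<lambda>t. f t + g t) \<in> Cb"
  unfolding Cb_def
proof (clarsimp, intro conjI)
  fix M1 M2 assume "continuous_on {0<..} f" "continuous_on {0<..} g"
  then show "continuous_on {0<..} (\<lambda>t. f t + g t)" by (intro continuous_intros)
next
  fix M1 M2 assume "\<forall>t>M1. f t = 0" "\<forall>t>M2. g t = 0"
  then show "\<exists>M. \<forall>t>M. f t + g t = 0" by (intro exI[of _ "max M1 M2"]) auto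
qed

lemma Cb_scale: "f \<in> Cb \<Longrightarrow> (\<lambda>t. c * f t) \<in> Cb"
  unfolding Cb_def by (auto intro: continuous_intros)

lemma DniR_add:
  assumes "f \<in> DniR n i R" "g \<in> DniR n i R"
  shows "(\<lambda>t. f t + g t) \<in> DniR n i R"
proof -
  have fc: "f \<in> Cb" and gc: "g \<in> Cb" using assms by (auto simp: DniR_def Dni_def)
  obtain L1 where L1: "(tailint n i f \<longlongrightarrow> L1) (at_right 0)" using assms by (auto simp: DniR_def Dni_def)
  obtain L2 where L2: "(tailint n i g \<longlongrightarrow> L2) (at_right 0)" using assms by (auto simp: DniR_def Dni_def)
  have "((\<lambda>t. tailint n i f t + tailint n i g t) \<longlongrightarrow> L1 + L2) (at_right 0)"
    by (intro tendsto_add L1 L2)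
  moreover have "\<forall>\<^sub>F t in at_right 0. tailint n i f t + tailint n i g t = tailint n i (\<lambda>t. f t + g t) t"
    using eventually_at_right_less[of "0::real"]
    by eventually_elim (simp add: tailint_add[OF fc gc])
  ultimately have "(tailint n i (\<lambda>t. f t + g t) \<longlongrightarrow> L1 + L2) (at_right 0)"
    by (rule Lim_transform_eventually)
  moreover have "((\<lambda>t. t ^ (n - i) * f t + t ^ (n - i) * g t) \<longlongrightarrow> 0 + 0) (at_right 0)"
    using assms by (intro tendsto_add) (auto simp: DniR_def Dni_def)
  ultimately show ?thesis using assms Cb_add[OF fc gc]
    by (auto simp: DniR_def Dni_def distrib_left)
qed

lemma DniR_scale:
  assumes "f \<in> DniR n i R"
  shows "(\<lambda>t. c * f t) \<in> DniR n i R"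
proof -
  have fc: "f \<in> Cb" using assms by (auto simp: DniR_def Dni_def)
  obtain L1 where L1: "(tailint n i f \<longlongrightarrow> L1) (at_right 0)" using assms by (auto simp: DniR_def Dni_def)
  have "((\<lambda>t. c * tailint n i f t) \<longlongrightarrow> c * L1) (at_right 0)"
    by (intro tendsto_mult L1 tendsto_const)
  moreover have "tailint n i (\<lambda>t. c * f t) = (\<lambda>t. c * tailint n i f t)"
    by (rule ext) (rule tailint_scale)
  ultimately have "(tailint n i (\<lambda>t. c * f t) \<longlongrightarrow> c * L1) (at_right 0)"
    by simp
  moreover have "((\<lambda>t. c * (t ^ (n - i) * f t)) \<longlongrightarrow> c * 0) (at_right 0)"
    using assms by (intro tendsto_mult tendsto_const) (auto simp: DniR_def Dni_def)
  ultimately show ?thesis using assms Cb_scale[OF fc]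
    by (auto simp: DniR_def Dni_def mult.left_commute)
qed

lemma DniR_diff:
  assumes "f \<in> DniR n i R" "g \<in> DniR n i R"
  shows "(\<lambda>t. f t - g t) \<in> DniR n i R"
  using DniR_add[OF assms(1) DniR_scale[OF assms(2), of "-1"]] by simp

lemma DniR_zero: "(\<lambda>t. 0) \<in> DniR n i R"
proof -
  have "tailint n i (\<lambda>t. 0) = (\<lambda>t. 0)" by (rule ext) (rule tailint_zero)
  then show ?thesis by (auto simp: DniR_def Dni_def Cb_def)
qed

lemma bound_from_right:
  fixes g :: "real \<Rightarrow> real"
  assumes lim: "(g \<longlongrightarrow> L) (at_right 0)" and far: "\<And>d. d > 0 \<Longrightarrow> \<exists>B. \<forall>t\<ge>d. \<bar>g t\<bar> \<le> B"
  shows "\<exists>B. \<forall>t>0. \<bar>g t\<bar> \<le> B"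
proof -
  have "\<forall>\<^sub>F t in at_right 0. dist (g t) L < 1" using lim by (rule tendstoD) simp
  then obtain d where d: "d > 0" "\<And>t. 0 < t \<Longrightarrow> t < d \<Longrightarrow> dist (g t) L < 1"
    by (auto simp: eventually_at_right_field)
  obtain B where B: "\<forall>t\<ge>d. \<bar>g t\<bar> \<le> B" using far[OF d(1)] by blast
  show ?thesis
  proof (intro exI[of _ "max B (\<bar>L\<bar> + 1)"] allI impI)
    fix t :: real assume t: "t > 0"
    show "\<bar>g t\<bar> \<le> max B (\<bar>L\<bar> + 1)"
    proof (cases "t < d")
      case True then have "dist (g t) L < 1" using d t by auto
      then show ?thesis by (auto simp: dist_real_def)
    next
      case False then have "t \<ge> d" by simp
      then have "\<bar>g t\<bar> \<le> B" using B by blast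
      then show ?thesis by simp
    qed
  qed
qed

lemma cont_bound:
  fixes h :: "real \<Rightarrow> real"
  assumes "continuous_on {a..b} h"
  shows "\<exists>K\<ge>0. \<forall>s\<in>{a..b}. \<bar>h s\<bar> \<le> K"
proof -
  have "bounded (h ` {a..b})"
    by (intro compact_imp_bounded compact_continuous_image assms) simp
  then obtain K where "K > 0" "\<forall>x\<in>h ` {a..b}. norm x \<le> K" by (auto simp: bounded_pos)
  then show ?thesis by (intro exI[of _ K]) auto
qed

lemma DniR_Cb: "f \<in> DniR n i R \<Longrightarrow> f \<in> Cb"
  by (simp add: DniR_def Dni_def)

lemma DniR_cont: "f \<in> DniR n i R \<Longrightarrow> continuous_on {0<..} f"
  by (simp add: DniR_def Dni_def Cb_def)

lemma DniR_supp: "f \<in> DniR n i R \<Longrightarrow> t > R \<Longrightarrow> f t = 0"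
  by (simp add: DniR_def)

lemma DniR_lim: "f \<in> DniR n i R \<Longrightarrow> \<exists>L. (tailint n i f \<longlongrightarrow> L) (at_right 0)"
  by (simp add: DniR_def Dni_def)

lemma DniR_lim0: "f \<in> DniR n i R \<Longrightarrow> ((\<lambda>t. t ^ (n - i) * f t) \<longlongrightarrow> 0) (at_right 0)"
  by (simp add: DniR_def Dni_def)

lemma tail_far:
  assumes f: "f \<in> DniR n i R" and d: "d > 0"
  shows "\<exists>B. \<forall>t\<ge>d. \<bar>tailint n i f t\<bar> \<le> B"
proof -
  define b0 where "b0 = max d R"
  have c: "continuous_on {0<..} f" using DniR_cont[OF f] .
  have cc: "continuous_on {a..b} (\<lambda>s. f s * s ^ (n - i - 1))" if "a > 0" for a b
    by (intro continuous_intros continuous_on_subset[OF c]) (use that in auto)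
  obtain K where K: "K \<ge> 0" "\<forall>s\<in>{d..b0}. \<bar>f s * s ^ (n - i - 1)\<bar> \<le> K"
    using cont_bound[OF cc[OF d, of b0]] by blast
  have "\<bar>tailint n i f t\<bar> \<le> K * b0" if t: "t \<ge> d" for t
  proof (cases "t \<le> b0")
    case True
    have "tailint n i f t = integral {t..b0} (\<lambda>s. f s * s ^ (n - i - 1))"
      unfolding tailint_def
      by (rule cb_tail(2)[OF DniR_Cb[OF f]]) (use t d True DniR_supp[OF f] in \<open>auto simp: b0_def\<close>)
    also have "\<bar>\<dots>\<bar> \<le> K * (b0 - t)"
      using integral_bound[OF True cc[of t b0]] K t d by auto
    also have "\<dots> \<le> K * b0" using K t d by (intro mult_left_mono) auto
    finally show ?thesis .
  next
    case False
    have "tailint n i f t = integral {t..t} (\<lambda>s. f s * s ^ (n - i - 1))"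
      unfolding tailint_def
      by (rule cb_tail(2)[OF DniR_Cb[OF f]]) (use t d False DniR_supp[OF f] in \<open>auto simp: b0_def\<close>)
    also have "\<bar>\<dots>\<bar> \<le> 0 * (t - t)"
      using integral_bound[of t t _ 0, OF _ cc[of t t]] t d by auto
    finally show ?thesis using K d False by (auto simp: b0_def)
  qed
  then show ?thesis by blast
qed

lemma pow_far:
  assumes f: "f \<in> DniR n i R" and d: "d > 0"
  shows "\<exists>B. \<forall>t\<ge>d. \<bar>t ^ (n - i) * f t\<bar> \<le> B"
proof -
  define b0 where "b0 = max d R"
  have c: "continuous_on {0<..} f" using DniR_cont[OF f] .
  have cc: "continuous_on {d..b0} (\<lambda>s. s ^ (n - i) * f s)"
    by (intro continuous_intros continuous_on_subset[OF c]) (use d in auto)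
  obtain K where K: "K \<ge> 0" "\<forall>s\<in>{d..b0}. \<bar>s ^ (n - i) * f s\<bar> \<le> K"
    using cont_bound[OF cc] by blast
  have "\<bar>t ^ (n - i) * f t\<bar> \<le> K" if t: "t \<ge> d" for t
  proof (cases "t \<le> b0")
    case True then show ?thesis using K t by auto
  next
    case False then show ?thesis using K DniR_supp[OF f, of t] by (auto simp: b0_def)
  qed
  then show ?thesis by blast
qed

lemma tail_bdd:
  assumes f: "f \<in> DniR n i R"
  shows "\<exists>B. \<forall>t>0. \<bar>tailint n i f t\<bar> \<le> B"
proof -
  obtain L where L: "(tailint n i f \<longlongrightarrow> L) (at_right 0)" using DniR_lim[OF f] by blast
  show ?thesis by (rule bound_from_right[OF L tail_far[OF f]])
qed

lemma pow_bdd: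
  assumes f: "f \<in> DniR n i R"
  shows "\<exists>B. \<forall>t>0. \<bar>t ^ (n - i) * f t\<bar> \<le> B"
  by (rule bound_from_right[OF DniR_lim0[OF f] pow_far[OF f]])

lemma dn_bdd:
  assumes f: "f \<in> DniR n i R"
  shows "bdd_above ((\<lambda>t. \<bar>real (n - i) * tailint n i f t\<bar>) ` {0<..})"
    and "bdd_above ((\<lambda>t. \<bar>t ^ (n - i) * f t + real (n - i) * tailint n i f t\<bar>) ` {0<..})"
proof -
  obtain B1 where B1: "\<forall>t>0. \<bar>tailint n i f t\<bar> \<le> B1" using tail_bdd[OF f] by blast
  obtain B2 where B2: "\<forall>t>0. \<bar>t ^ (n - i) * f t\<bar> \<le> B2" using pow_bdd[OF f] by blast
  have 1: "\<bar>real (n - i) * tailint n i f t\<bar> \<le> real (n - i) * B1" if "t > 0" for t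
    using B1 that by (auto simp: abs_mult intro!: mult_left_mono)
  show "bdd_above ((\<lambda>t. \<bar>real (n - i) * tailint n i f t\<bar>) ` {0<..})"
    using 1 by (intro bdd_aboveI2) auto
  have "\<bar>t ^ (n - i) * f t + real (n - i) * tailint n i f t\<bar> \<le> B2 + real (n - i) * B1" if "t > 0" for t
    using 1[OF that] B2[rule_format, OF that] abs_triangle_ineq[of "t ^ (n - i) * f t" "real (n - i) * tailint n i f t"] by linarith
  then show "bdd_above ((\<lambda>t. \<bar>t ^ (n - i) * f t + real (n - i) * tailint n i f t\<bar>) ` {0<..})"
    by (intro bdd_aboveI2) auto
qed

definition S1 where "S1 n i f = (SUP t\<in>{0<..}. \<bar>real (n - i) * tailint n i f t\<bar>)"
definition S2 where "S2 n i f = (SUP t\<in>{0<..}. \<bar>t ^ (n - i) * f t + real (n - i) * tailint n i f t\<bar>)"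

lemma dnorm_S: "dnorm n i f = S1 n i f + S2 n i f"
  by (simp add: dnorm_def S1_def S2_def)

lemma S_upper:
  assumes f: "f \<in> DniR n i R" and t: "t > 0"
  shows "\<bar>real (n - i) * tailint n i f t\<bar> \<le> S1 n i f"
    and "\<bar>t ^ (n - i) * f t + real (n - i) * tailint n i f t\<bar> \<le> S2 n i f"
  unfolding S1_def S2_def using t by (auto intro!: cSUP_upper dn_bdd[OF f])

lemma S_nonneg:
  assumes f: "f \<in> DniR n i R"
  shows "0 \<le> S1 n i f" "0 \<le> S2 n i f"
  using S_upper[OF f zero_less_one] by (meson abs_ge_zero order_trans)+

lemma dn_upper:
  assumes f: "f \<in> DniR n i R" and t: "t > 0"
  shows "\<bar>real (n - i) * tailint n i f t\<bar> \<le> dnorm n i f"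
    and "\<bar>t ^ (n - i) * f t + real (n - i) * tailint n i f t\<bar> \<le> dnorm n i f"
  using S_upper[OF f t] S_nonneg[OF f] unfolding dnorm_S by linarith+

lemma dn_nonneg: "f \<in> DniR n i R \<Longrightarrow> 0 \<le> dnorm n i f"
  using S_nonneg[of f n i R] unfolding dnorm_S by linarith

lemma dn_le:
  assumes "\<And>t. t > 0 \<Longrightarrow> \<bar>real (n - i) * tailint n i f t\<bar> \<le> B1"
    and "\<And>t. t > 0 \<Longrightarrow> \<bar>t ^ (n - i) * f t + real (n - i) * tailint n i f t\<bar> \<le> B2"
  shows "dnorm n i f \<le> B1 + B2"
proof -
  have "S1 n i f \<le> B1" unfolding S1_def by (rule cSUP_least) (use assms in auto)
  moreover have "S2 n i f \<le> B2" unfolding S2_def by (rule cSUP_least) (use assms in auto)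
  ultimately show ?thesis unfolding dnorm_S by simp
qed

lemma dn_zero: "dnorm n i (\<lambda>t. 0) = 0"
proof -
  have "dnorm n i (\<lambda>t. 0) \<le> 0 + 0" by (rule dn_le) (auto simp: tailint_zero)
  then show ?thesis using dn_nonneg[OF DniR_zero[of n i 0]] by linarith
qed

lemma dn_eq0:
  assumes f: "f \<in> DniR n i R" and z: "dnorm n i f = 0"
  shows "f = (\<lambda>t. 0)"
proof
  fix t :: real
  show "f t = 0"
  proof (cases "t > 0")
    case True
    have a: "\<bar>real (n - i) * tailint n i f t\<bar> \<le> 0"
     and b: "\<bar>t ^ (n - i) * f t + real (n - i) * tailint n i f t\<bar> \<le> 0"
      using dn_upper[OF f True] z by auto
    have c: "real (n - i) * tailint n i f t = 0" using a by simp
    show ?thesis using b True unfolding c by simp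
  next
    case False then show ?thesis using f by (auto simp: DniR_def Dni_def Cb_def)
  qed
qed

lemma dn_scale_le:
  assumes f: "f \<in> DniR n i R"
  shows "dnorm n i (\<lambda>t. c * f t) \<le> \<bar>c\<bar> * dnorm n i f"
proof -
  have "dnorm n i (\<lambda>t. c * f t) \<le> \<bar>c\<bar> * S1 n i f + \<bar>c\<bar> * S2 n i f"
  proof (rule dn_le)
    fix t :: real assume t: "t > 0"
    have "\<bar>real (n - i) * tailint n i (\<lambda>t. c * f t) t\<bar> = \<bar>c\<bar> * \<bar>real (n - i) * tailint n i f t\<bar>"
      by (simp add: tailint_scale abs_mult)
    also have "\<dots> \<le> \<bar>c\<bar> * S1 n i f" using S_upper(1)[OF f t] by (intro mult_left_mono) auto
    finally show "\<bar>real (n - i) * tailint n i (\<lambda>t. c * f t) t\<bar> \<le> \<bar>c\<bar> * S1 n i f" .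
    have "\<bar>t ^ (n - i) * (c * f t) + real (n - i) * tailint n i (\<lambda>t. c * f t) t\<bar>
        = \<bar>c\<bar> * \<bar>t ^ (n - i) * f t + real (n - i) * tailint n i f t\<bar>"
      by (simp add: tailint_scale abs_mult[symmetric] algebra_simps)
    also have "\<dots> \<le> \<bar>c\<bar> * S2 n i f" using S_upper(2)[OF f t] by (intro mult_left_mono) auto
    finally show "\<bar>t ^ (n - i) * (c * f t) + real (n - i) * tailint n i (\<lambda>t. c * f t) t\<bar> \<le> \<bar>c\<bar> * S2 n i f" .
  qed
  then show ?thesis unfolding dnorm_S by (simp add: distrib_left)
qed

lemma dn_scale:
  assumes f: "f \<in> DniR n i R"
  shows "dnorm n i (\<lambda>t. c * f t) = \<bar>c\<bar> * dnorm n i f"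
proof (cases "c = 0")
  case True then show ?thesis using dn_zero by simp
next
  case False
  have "dnorm n i (\<lambda>t. (1 / c) * (c * f t)) \<le> \<bar>1 / c\<bar> * dnorm n i (\<lambda>t. c * f t)"
    by (rule dn_scale_le[OF DniR_scale[OF f]])
  then have "dnorm n i f \<le> \<bar>1 / c\<bar> * dnorm n i (\<lambda>t. c * f t)" using False by simp
  then have "\<bar>c\<bar> * dnorm n i f \<le> dnorm n i (\<lambda>t. c * f t)" using False
    by (simp add: field_simps)
  then show ?thesis using dn_scale_le[OF f, of c] by linarith
qed

lemma dn_triangle:
  assumes f: "f \<in> DniR n i R" and g: "g \<in> DniR n i R"
  shows "dnorm n i (\<lambda>t. f t + g t) \<le> dnorm n i f + dnorm n i g"
proof -
  have "dnorm n i (\<lambda>t. f t + g t) \<le> (S1 n i f + S1 n i g) + (S2 n i f + S2 n i g)"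
  proof (rule dn_le)
    fix t :: real assume t: "t > 0"
    have e: "tailint n i (\<lambda>t. f t + g t) t = tailint n i f t + tailint n i g t"
      by (rule tailint_add[OF DniR_Cb[OF f] DniR_Cb[OF g] t])
    show "\<bar>real (n - i) * tailint n i (\<lambda>t. f t + g t) t\<bar> \<le> S1 n i f + S1 n i g"
      using S_upper(1)[OF f t] S_upper(1)[OF g t]
        abs_triangle_ineq[of "real (n - i) * tailint n i f t" "real (n - i) * tailint n i g t"]
      unfolding e distrib_left by linarith
    have q: "t ^ (n - i) * (f t + g t) + real (n - i) * tailint n i (\<lambda>t. f t + g t) t
      = (t ^ (n - i) * f t + real (n - i) * tailint n i f t) + (t ^ (n - i) * g t + real (n - i) * tailint n i g t)"
      unfolding e by (simp add: algebra_simps)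
    show "\<bar>t ^ (n - i) * (f t + g t) + real (n - i) * tailint n i (\<lambda>t. f t + g t) t\<bar> \<le> S2 n i f + S2 n i g"
      using S_upper(2)[OF f t] S_upper(2)[OF g t]
        abs_triangle_ineq[of "t ^ (n - i) * f t + real (n - i) * tailint n i f t" "t ^ (n - i) * g t + real (n - i) * tailint n i g t"]
      unfolding q by linarith
  qed
  then show ?thesis unfolding dnorm_S by simp
qed

lemma lim_helper:
  fixes u :: "nat \<Rightarrow> real"
  assumes C: "C \<ge> 0" and h: "\<And>e. e > 0 \<Longrightarrow> \<exists>N. \<forall>k\<ge>N. \<bar>u k - v\<bar> \<le> C * e"
  shows "u \<longlonglongrightarrow> v"
proof (rule LIMSEQ_I)
  fix r :: real assume r: "0 < r"
  have "r / (C + 1) > 0" using r C by simp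
  then obtain N where N: "\<forall>k\<ge>N. \<bar>u k - v\<bar> \<le> C * (r / (C + 1))" using h by blast
  have "C * (r / (C + 1)) < r" using r C by (simp add: field_simps)
  then show "\<exists>no. \<forall>n\<ge>no. norm (u n - v) < r" using N by (intro exI[of _ N]) force
qed

lemma limit_bound:
  fixes u :: "nat \<Rightarrow> real"
  assumes "u \<longlonglongrightarrow> l" and "\<And>a. a \<ge> N \<Longrightarrow> \<bar>w - u a\<bar> \<le> B"
  shows "\<bar>w - l\<bar> \<le> B"
proof -
  have "(\<lambda>a. \<bar>w - u a\<bar>) \<longlonglongrightarrow> \<bar>w - l\<bar>" by (intro tendsto_intros assms(1))
  then show ?thesis by (rule LIMSEQ_le_const2) (use assms(2) in blast)
qed

lemma Cb_diff: "f \<in> Cb \<Longrightarrow> g \<in> Cb \<Longrightarrow> (\<lambda>t. f t - g t) \<in> Cb"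
  using Cb_add[OF _ Cb_scale[of g "-1"], of f] by simp

lemma diff_bounds:
  assumes f: "f \<in> DniR n i R" and g: "g \<in> DniR n i R" and t: "t > 0"
  shows "\<bar>real (n - i) * tailint n i f t - real (n - i) * tailint n i g t\<bar> \<le> dnorm n i (\<lambda>t. f t - g t)"
    and "\<bar>t ^ (n - i) * f t - t ^ (n - i) * g t\<bar> \<le> 2 * dnorm n i (\<lambda>t. f t - g t)"
proof -
  have h: "(\<lambda>t. f t - g t) \<in> DniR n i R" by (rule DniR_diff[OF f g])
  have e: "tailint n i (\<lambda>t. f t - g t) t = tailint n i f t - tailint n i g t"
    by (rule tailint_diff[OF DniR_Cb[OF f] DniR_Cb[OF g] t])
  have 1: "\<bar>real (n - i) * tailint n i f t - real (n - i) * tailint n i g t\<bar> \<le> dnorm n i (\<lambda>t. f t - g t)"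
    using dn_upper(1)[OF h t] unfolding e by (simp add: right_diff_distrib)
  have 2: "\<bar>(t ^ (n - i) * f t - t ^ (n - i) * g t) + (real (n - i) * tailint n i f t - real (n - i) * tailint n i g t)\<bar> \<le> dnorm n i (\<lambda>t. f t - g t)"
    using dn_upper(2)[OF h t] unfolding e by (simp add: right_diff_distrib)
  show "\<bar>real (n - i) * tailint n i f t - real (n - i) * tailint n i g t\<bar> \<le> dnorm n i (\<lambda>t. f t - g t)"
    by (rule 1)
  show "\<bar>t ^ (n - i) * f t - t ^ (n - i) * g t\<bar> \<le> 2 * dnorm n i (\<lambda>t. f t - g t)"
    using 1 2 abs_triangle_ineq4[of "(t ^ (n - i) * f t - t ^ (n - i) * g t) + (real (n - i) * tailint n i f t - real (n - i) * tailint n i g t)"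
        "real (n - i) * tailint n i f t - real (n - i) * tailint n i g t"]
    by simp
qed

lemma div_bound:
  fixes d t a e :: real
  assumes "0 < a" "a \<le> t" "0 \<le> e" "\<bar>t ^ m * d\<bar> \<le> e * a ^ m"
  shows "\<bar>d\<bar> \<le> e"
proof -
  have "a ^ m \<le> t ^ m" using assms by (intro power_mono) auto
  then have "e * a ^ m \<le> e * t ^ m" using assms by (intro mult_left_mono) auto
  moreover have "\<bar>d\<bar> * t ^ m = \<bar>t ^ m * d\<bar>" using assms(1,2) by (simp add: abs_mult mult.commute)
  ultimately have "\<bar>d\<bar> * t ^ m \<le> e * t ^ m" using assms(4) by linarith
  moreover have "t ^ m > 0" using assms by simp
  ultimately show ?thesis by (rule mult_right_le_imp_le)
qed

lemma abs_scale_le: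
  fixes r a b :: real
  assumes "1 \<le> r"
  shows "\<bar>a - b\<bar> \<le> \<bar>r * a - r * b\<bar>"
proof -
  have "\<bar>r * a - r * b\<bar> = r * \<bar>a - b\<bar>"
    using assms by (simp add: right_diff_distrib[symmetric] abs_mult)
  moreover have "1 * \<bar>a - b\<bar> \<le> r * \<bar>a - b\<bar>" using assms by (intro mult_right_mono) auto
  ultimately show ?thesis by simp
qed

lemma completeness:
  assumes m: "i < n" and X: "\<And>k. X k \<in> DniR n i R"
    and Cau: "\<And>e. e > 0 \<Longrightarrow> \<exists>N. \<forall>a\<ge>N. \<forall>b\<ge>N. dnorm n i (\<lambda>t. X a t - X b t) < e"
  shows "\<exists>\<zeta>\<in>DniR n i R. (\<lambda>k. dnorm n i (\<lambda>t. X k t - \<zeta> t)) \<longlonglongrightarrow> 0"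
proof -
  have m1: "real (n - i) \<ge> 1" using m by simp
  define \<zeta> where "\<zeta> t = (if t > 0 then lim (\<lambda>k. X k t) else 0)" for t
  have conv: "(\<lambda>k. X k t) \<longlonglongrightarrow> \<zeta> t" if t: "t > 0" for t
  proof -
    have "Cauchy (\<lambda>k. X k t)"
    proof (rule CauchyI)
      fix e :: real assume e: "0 < e"
      have tp: "t ^ (n - i) > 0" using t by simp
      obtain N where N: "\<forall>a\<ge>N. \<forall>b\<ge>N. dnorm n i (\<lambda>t. X a t - X b t) < e * t ^ (n - i) / 2"
        using Cau[of "e * t ^ (n - i) / 2"] e tp by auto
      have "norm (X a t - X b t) < e" if "a \<ge> N" "b \<ge> N" for a b
      proof -
        have "\<bar>t ^ (n - i) * X a t - t ^ (n - i) * X b t\<bar> < e * t ^ (n - i)"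
          using diff_bounds(2)[OF X X t, of a b] N that by fastforce
        moreover have "\<bar>t ^ (n - i) * X a t - t ^ (n - i) * X b t\<bar> = \<bar>t ^ (n - i)\<bar> * \<bar>X a t - X b t\<bar>"
          by (simp only: right_diff_distrib[symmetric] abs_mult)
        moreover have "\<bar>t ^ (n - i)\<bar> = t ^ (n - i)" using tp by (rule abs_of_pos)
        ultimately have "t ^ (n - i) * \<bar>X a t - X b t\<bar> < t ^ (n - i) * e" by (simp add: mult.commute)
        then show ?thesis using mult_less_cancel_left_pos[OF tp] by simp
      qed
      then show "\<exists>M. \<forall>a\<ge>M. \<forall>b\<ge>M. norm (X a t - X b t) < e" by blast
    qed
    then have "(\<lambda>k. X k t) \<longlonglongrightarrow> lim (\<lambda>k. X k t)"
      by (simp add: Cauchy_convergent_iff convergent_LIMSEQ_iff)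
    then show ?thesis using t by (simp add: \<zeta>_def)
  qed
  have UP: "\<exists>N. \<forall>k\<ge>N. \<forall>t>0. \<bar>t ^ (n - i) * X k t - t ^ (n - i) * \<zeta> t\<bar> \<le> e" if e: "e > 0" for e
  proof -
    obtain N where N: "\<forall>a\<ge>N. \<forall>b\<ge>N. dnorm n i (\<lambda>t. X a t - X b t) < e / 2"
      using Cau[of "e / 2"] e by auto
    have "\<bar>t ^ (n - i) * X k t - t ^ (n - i) * \<zeta> t\<bar> \<le> e" if k: "k \<ge> N" and t: "t > 0" for k t
    proof (rule limit_bound)
      show "(\<lambda>a. t ^ (n - i) * X a t) \<longlonglongrightarrow> t ^ (n - i) * \<zeta> t"
        by (intro tendsto_intros conv t)
      fix a assume a: "a \<ge> N"
      show "\<bar>t ^ (n - i) * X k t - t ^ (n - i) * X a t\<bar> \<le> e"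
        using diff_bounds(2)[OF X X t, of k a] N a k by fastforce
    qed
    then show ?thesis by blast
  qed
  have Ua: "\<exists>N. \<forall>k\<ge>N. \<forall>t\<ge>a. \<bar>X k t - \<zeta> t\<bar> \<le> e" if a: "a > 0" and e: "e > 0" for a e
  proof -
    obtain N where N: "\<forall>k\<ge>N. \<forall>t>0. \<bar>t ^ (n - i) * X k t - t ^ (n - i) * \<zeta> t\<bar> \<le> e * a ^ (n - i)"
      using UP[of "e * a ^ (n - i)"] a e by auto
    have "\<bar>X k t - \<zeta> t\<bar> \<le> e" if "k \<ge> N" "t \<ge> a" for k t
      by (rule div_bound[of a t e "n - i"]) (use a e that N in \<open>auto simp: right_diff_distrib\<close>)
    then show ?thesis by blast
  qed
  have cont: "continuous_on {0<..} \<zeta>"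
  proof (subst continuous_on_eq_continuous_at, simp, intro ballI)
    fix x :: real assume "x \<in> {0<..}"
    then have x: "x > 0" by simp
    have "continuous_on {x/2<..} \<zeta>"
    proof (rule uniform_limit_theorem)
      show "\<forall>\<^sub>F k in sequentially. continuous_on {x/2<..} (X k)"
        using x by (intro always_eventually allI continuous_on_subset[OF DniR_cont[OF X]]) auto
      show "uniform_limit {x/2<..} X \<zeta> sequentially"
      proof (rule uniform_limitI)
        fix e :: real assume e: "e > 0"
        obtain N where N: "\<forall>k\<ge>N. \<forall>t\<ge>x/2. \<bar>X k t - \<zeta> t\<bar> \<le> e/2"
          using Ua[of "x/2" "e/2"] x e by auto
        show "\<forall>\<^sub>F k in sequentially. \<forall>t\<in>{x/2<..}. dist (X k t) (\<zeta> t) < e"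
          unfolding eventually_sequentially
        proof (rule exI[of _ N], intro allI impI ballI)
          fix k t assume "k \<ge> N" "t \<in> {x/2<..}"
          then have "\<bar>X k t - \<zeta> t\<bar> \<le> e/2" using N by auto
          then show "dist (X k t) (\<zeta> t) < e" using e by (simp add: dist_real_def)
        qed
      qed
    qed simp
    then show "isCont \<zeta> x"
      using x by (subst (asm) continuous_on_eq_continuous_at) auto
  qed
  have supp: "\<zeta> t = 0" if "t > R" for t
  proof -
    have "(\<lambda>k. X k t) = (\<lambda>k. 0)" using DniR_supp[OF X that] by simp
    then show ?thesis using that conv[of t] LIMSEQ_unique[OF _ tendsto_const]
      by (cases "t > 0") (auto simp: \<zeta>_def)
  qed
  have zCb: "\<zeta> \<in> Cb"
  proof -
    have "\<forall>t\<le>0. \<zeta> t = 0" by (simp add: \<zeta>_def)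
    then show ?thesis unfolding Cb_def using cont supp by blast
  qed
  have Tconv: "(\<lambda>k. tailint n i (X k) t) \<longlonglongrightarrow> tailint n i \<zeta> t" if t: "t > 0" for t
  proof -
    define b where "b = max t R"
    have tb: "t \<le> b" by (simp add: b_def)
    show ?thesis
    proof (rule lim_helper[of "b ^ (n - i - 1) * (b - t)"])
      show "0 \<le> b ^ (n - i - 1) * (b - t)" using t tb by simp
      fix e :: real assume e: "e > 0"
      obtain N where N: "\<forall>k\<ge>N. \<forall>s\<ge>t. \<bar>X k s - \<zeta> s\<bar> \<le> e" using Ua[OF t e] by blast
      have "\<bar>tailint n i (X k) t - tailint n i \<zeta> t\<bar> \<le> b ^ (n - i - 1) * (b - t) * e" if k: "k \<ge> N" for k
      proof -
        have dC: "(\<lambda>s. X k s - \<zeta> s) \<in> Cb" by (rule Cb_diff[OF DniR_Cb[OF X] zCb])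
        have "tailint n i (X k) t - tailint n i \<zeta> t = tailint n i (\<lambda>s. X k s - \<zeta> s) t"
          by (rule tailint_diff[OF DniR_Cb[OF X] zCb t, symmetric])
        also have "\<dots> = integral {t..b} (\<lambda>s. (X k s - \<zeta> s) * s ^ (n - i - 1))"
          unfolding tailint_def
          by (rule cb_tail(2)[OF dC t tb]) (use DniR_supp[OF X] supp in \<open>auto simp: b_def\<close>)
        finally have eq: "tailint n i (X k) t - tailint n i \<zeta> t = integral {t..b} (\<lambda>s. (X k s - \<zeta> s) * s ^ (n - i - 1))" .
        have cc: "continuous_on {t..b} (\<lambda>s. (X k s - \<zeta> s) * s ^ (n - i - 1))"
          by (intro continuous_intros continuous_on_subset[OF DniR_cont[OF X]] continuous_on_subset[OF cont])
            (use t in auto)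
        have "norm (integral {t..b} (\<lambda>s. (X k s - \<zeta> s) * s ^ (n - i - 1))) \<le> (e * b ^ (n - i - 1)) * (b - t)"
        proof (rule integral_bound[OF tb cc])
          fix s assume s: "s \<in> {t..b}"
          have "\<bar>X k s - \<zeta> s\<bar> \<le> e" using N k s by auto
          moreover have "s ^ (n - i - 1) \<le> b ^ (n - i - 1)" using s t by (intro power_mono) auto
          ultimately have "\<bar>X k s - \<zeta> s\<bar> * s ^ (n - i - 1) \<le> e * b ^ (n - i - 1)"
            using s t e by (intro mult_mono) auto
          then show "norm ((X k s - \<zeta> s) * s ^ (n - i - 1)) \<le> e * b ^ (n - i - 1)"
            using s t by (simp add: abs_mult)
        qed
        then show ?thesis unfolding eq by (simp add: algebra_simps)
      qed
      then show "\<exists>N. \<forall>k\<ge>N. \<bar>tailint n i (X k) t - tailint n i \<zeta> t\<bar> \<le> b ^ (n - i - 1) * (b - t) * e"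
        by blast
    qed
  qed
  have UF: "\<exists>N. \<forall>k\<ge>N. \<forall>t>0. \<bar>real (n - i) * tailint n i (X k) t - real (n - i) * tailint n i \<zeta> t\<bar> \<le> e"
    if e: "e > 0" for e
  proof -
    obtain N where N: "\<forall>a\<ge>N. \<forall>b\<ge>N. dnorm n i (\<lambda>t. X a t - X b t) < e"
      using Cau[of e] e by auto
    have "\<bar>real (n - i) * tailint n i (X k) t - real (n - i) * tailint n i \<zeta> t\<bar> \<le> e"
      if k: "k \<ge> N" and t: "t > 0" for k t
    proof (rule limit_bound)
      show "(\<lambda>a. real (n - i) * tailint n i (X a) t) \<longlonglongrightarrow> real (n - i) * tailint n i \<zeta> t"
        by (intro tendsto_intros Tconv t)
      fix a assume a: "a \<ge> N"
      show "\<bar>real (n - i) * tailint n i (X k) t - real (n - i) * tailint n i (X a) t\<bar> \<le> e"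
        using diff_bounds(1)[OF X X t, of k a] N a k by fastforce
    qed
    then show ?thesis by blast
  qed
  have "\<forall>k. \<exists>L. (tailint n i (X k) \<longlongrightarrow> L) (at_right 0)" using DniR_lim[OF X] by blast
  then obtain c where c: "\<And>k. (tailint n i (X k) \<longlongrightarrow> c k) (at_right 0)" by metis
  have "Cauchy c"
  proof (rule CauchyI)
    fix e :: real assume e: "0 < e"
    obtain N where N: "\<forall>a\<ge>N. \<forall>b\<ge>N. dnorm n i (\<lambda>t. X a t - X b t) < e"
      using Cau[of e] e by auto
    have "norm (c a - c b) < e" if ab: "a \<ge> N" "b \<ge> N" for a b
    proof -
      have "((\<lambda>t. \<bar>real (n - i) * tailint n i (X a) t - real (n - i) * tailint n i (X b) t\<bar>)
          \<longlongrightarrow> \<bar>real (n - i) * c a - real (n - i) * c b\<bar>) (at_right 0)"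
        by (intro tendsto_intros c)
      moreover have "\<forall>\<^sub>F t in at_right 0. \<bar>real (n - i) * tailint n i (X a) t - real (n - i) * tailint n i (X b) t\<bar>
          \<le> dnorm n i (\<lambda>t. X a t - X b t)"
        using eventually_at_right_less[of "0::real"]
        by eventually_elim (rule diff_bounds(1)[OF X X])
      ultimately have "\<bar>real (n - i) * c a - real (n - i) * c b\<bar> \<le> dnorm n i (\<lambda>t. X a t - X b t)"
        by (intro tendsto_upperbound) auto
      moreover have "\<bar>c a - c b\<bar> \<le> \<bar>real (n - i) * c a - real (n - i) * c b\<bar>"
        by (rule abs_scale_le[OF m1])
      moreover have "dnorm n i (\<lambda>t. X a t - X b t) < e" using N ab by blast
      ultimately show ?thesis by simp
    qed
    then show "\<exists>M. \<forall>a\<ge>M. \<forall>b\<ge>M. norm (c a - c b) < e" by blast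
  qed
  then obtain c0 where c0: "c \<longlonglongrightarrow> c0"
    by (auto simp: Cauchy_convergent_iff convergent_def)
  have Tlim: "(tailint n i \<zeta> \<longlongrightarrow> c0) (at_right 0)"
  proof (rule swap_uniform_limit')
    show "\<forall>\<^sub>F k in sequentially. (tailint n i (X k) \<longlongrightarrow> c k) (at_right 0)" using c by simp
    show "c \<longlonglongrightarrow> c0" by (rule c0)
    show "\<forall>\<^sub>F x in at_right 0. x \<in> {0::real<..}" using eventually_at_right_less[of "0::real"] by simp
    show "uniform_limit {0<..} (\<lambda>k. tailint n i (X k)) (tailint n i \<zeta>) sequentially"
    proof (rule uniform_limitI)
      fix e :: real assume e: "e > 0"
      obtain N where N: "\<forall>k\<ge>N. \<forall>t>0. \<bar>real (n - i) * tailint n i (X k) t - real (n - i) * tailint n i \<zeta> t\<bar> \<le> e / 2"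
        using UF[of "e/2"] e by auto
      have "dist (tailint n i (X k) t) (tailint n i \<zeta> t) < e" if "k \<ge> N" "t > 0" for k t
      proof -
        have "\<bar>tailint n i (X k) t - tailint n i \<zeta> t\<bar> \<le> \<bar>real (n - i) * tailint n i (X k) t - real (n - i) * tailint n i \<zeta> t\<bar>"
          by (rule abs_scale_le[OF m1])
        moreover have "\<bar>real (n - i) * tailint n i (X k) t - real (n - i) * tailint n i \<zeta> t\<bar> \<le> e / 2"
          using N that by blast
        ultimately show ?thesis using e by (simp add: dist_real_def)
      qed
      then show "\<forall>\<^sub>F k in sequentially. \<forall>t\<in>{0<..}. dist (tailint n i (X k) t) (tailint n i \<zeta> t) < e"
        unfolding eventually_sequentially by auto
    qed
  qed simp
  have Plim: "((\<lambda>t. t ^ (n - i) * \<zeta> t) \<longlongrightarrow> 0) (at_right 0)"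
  proof (rule swap_uniform_limit'[where g = "\<lambda>k. 0" and f = "\<lambda>k t. t ^ (n - i) * X k t"])
    show "\<forall>\<^sub>F k in sequentially. ((\<lambda>t. t ^ (n - i) * X k t) \<longlongrightarrow> 0) (at_right 0)"
      using DniR_lim0[OF X] by simp
    show "\<forall>\<^sub>F x in at_right 0. x \<in> {0::real<..}" using eventually_at_right_less[of "0::real"] by simp
    show "uniform_limit {0<..} (\<lambda>k t. t ^ (n - i) * X k t) (\<lambda>t. t ^ (n - i) * \<zeta> t) sequentially"
    proof (rule uniform_limitI)
      fix e :: real assume e: "e > 0"
      obtain N where N: "\<forall>k\<ge>N. \<forall>t>0. \<bar>t ^ (n - i) * X k t - t ^ (n - i) * \<zeta> t\<bar> \<le> e / 2"
        using UP[of "e/2"] e by auto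
      have "dist (t ^ (n - i) * X k t) (t ^ (n - i) * \<zeta> t) < e" if "k \<ge> N" "t > 0" for k t
      proof -
        have "\<bar>t ^ (n - i) * X k t - t ^ (n - i) * \<zeta> t\<bar> \<le> e / 2" using N that by blast
        then show ?thesis using e by (simp add: dist_real_def)
      qed
      then show "\<forall>\<^sub>F k in sequentially. \<forall>t\<in>{0<..}. dist (t ^ (n - i) * X k t) (t ^ (n - i) * \<zeta> t) < e"
        unfolding eventually_sequentially by auto
    qed
  qed simp_all
  have zD: "\<zeta> \<in> DniR n i R"
    unfolding DniR_def Dni_def using zCb Plim Tlim supp by auto
  have "(\<lambda>k. dnorm n i (\<lambda>t. X k t - \<zeta> t)) \<longlonglongrightarrow> 0"
  proof (rule lim_helper[of 4])
    fix e :: real assume e: "e > 0"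
    obtain N1 where N1: "\<forall>k\<ge>N1. \<forall>t>0. \<bar>t ^ (n - i) * X k t - t ^ (n - i) * \<zeta> t\<bar> \<le> e"
      using UP[OF e] by blast
    obtain N2 where N2: "\<forall>k\<ge>N2. \<forall>t>0. \<bar>real (n - i) * tailint n i (X k) t - real (n - i) * tailint n i \<zeta> t\<bar> \<le> e"
      using UF[OF e] by blast
    have "\<bar>dnorm n i (\<lambda>t. X k t - \<zeta> t) - 0\<bar> \<le> 4 * e" if k: "k \<ge> max N1 N2" for k
    proof -
      have "dnorm n i (\<lambda>t. X k t - \<zeta> t) \<le> e + 3 * e"
      proof (rule dn_le)
        fix t :: real assume t: "t > 0"
        have eq: "tailint n i (\<lambda>t. X k t - \<zeta> t) t = tailint n i (X k) t - tailint n i \<zeta> t"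
          by (rule tailint_diff[OF DniR_Cb[OF X] zCb t])
        have a: "\<bar>real (n - i) * tailint n i (X k) t - real (n - i) * tailint n i \<zeta> t\<bar> \<le> e"
          using N2 k t by auto
        have b: "\<bar>t ^ (n - i) * X k t - t ^ (n - i) * \<zeta> t\<bar> \<le> e"
          using N1 k t by auto
        show "\<bar>real (n - i) * tailint n i (\<lambda>t. X k t - \<zeta> t) t\<bar> \<le> e"
          using a unfolding eq by (simp add: right_diff_distrib)
        show "\<bar>t ^ (n - i) * (X k t - \<zeta> t) + real (n - i) * tailint n i (\<lambda>t. X k t - \<zeta> t) t\<bar> \<le> 3 * e"
          using a b e abs_triangle_ineq[of "t ^ (n - i) * X k t - t ^ (n - i) * \<zeta> t"
              "real (n - i) * tailint n i (X k) t - real (n - i) * tailint n i \<zeta> t"]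
          unfolding eq by (simp add: right_diff_distrib)
      qed
      moreover have "0 \<le> dnorm n i (\<lambda>t. X k t - \<zeta> t)"
        by (rule dn_nonneg[OF DniR_diff[OF X zD]])
      ultimately show ?thesis by simp
    qed
    then show "\<exists>N. \<forall>k\<ge>N. \<bar>dnorm n i (\<lambda>t. X k t - \<zeta> t) - 0\<bar> \<le> 4 * e" by blast
  qed simp
  then show ?thesis using zD by blast
qed

lemma tail_split:
  assumes f: "f \<in> Cb" and z: "\<forall>s>R. f s = 0" and t: "0 < t" "t \<le> d" "d \<le> R"
  shows "tailint n i f t = integral {t..d} (\<lambda>s. f s * s ^ (n - i - 1)) + tailint n i f d"
proof -
  have c: "continuous_on {0<..} f" using f by (simp add: Cb_def)
  have int: "(\<lambda>s. f s * s ^ (n - i - 1)) integrable_on {t..R}"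
    by (intro integrable_continuous_real continuous_intros continuous_on_subset[OF c]) (use t in auto)
  have "tailint n i f t = integral {t..R} (\<lambda>s. f s * s ^ (n - i - 1))"
    unfolding tailint_def by (rule cb_tail(2)[OF f]) (use t z in auto)
  moreover have "tailint n i f d = integral {d..R} (\<lambda>s. f s * s ^ (n - i - 1))"
    unfolding tailint_def by (rule cb_tail(2)[OF f]) (use t z in auto)
  moreover have "integral {t..d} (\<lambda>s. f s * s ^ (n - i - 1)) + integral {d..R} (\<lambda>s. f s * s ^ (n - i - 1))
      = integral {t..R} (\<lambda>s. f s * s ^ (n - i - 1))"
    by (rule Henstock_Kurzweil_Integration.integral_combine[OF t(2,3) int])
  ultimately show ?thesis by simp
qed

lemma density:
  assumes m: "i < n" and R: "R > 0" and z: "\<zeta> \<in> DniR n i R" and e: "e > 0"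
  shows "\<exists>\<phi>\<in>Cc0 \<inter> DniR n i R. dnorm n i (\<lambda>t. \<zeta> t - \<phi> t) < e"
proof -
  have m1: "real (n - i) \<ge> 1" using m by simp
  obtain L where L: "(tailint n i \<zeta> \<longlongrightarrow> L) (at_right 0)" using DniR_lim[OF z] by blast
  define \<eta> where "\<eta> = e / (6 * real (n - i) + 3)"
  have \<eta>: "\<eta> > 0" using e m1 by (simp add: \<eta>_def)
  have e\<eta>: "e = (6 * real (n - i) + 3) * \<eta>" using m1 by (simp add: \<eta>_def)
  have "\<forall>\<^sub>F t in at_right 0. dist (tailint n i \<zeta> t) L < \<eta>" using L \<eta> by (rule tendstoD)
  moreover have "\<forall>\<^sub>F t in at_right 0. dist (t ^ (n - i) * \<zeta> t) 0 < \<eta>" using DniR_lim0[OF z] \<eta> by (rule tendstoD)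
  ultimately have "\<forall>\<^sub>F t in at_right 0. dist (tailint n i \<zeta> t) L < \<eta> \<and> dist (t ^ (n - i) * \<zeta> t) 0 < \<eta>"
    by (rule eventually_conj)
  then obtain d where d: "d > 0"
    and dP: "\<And>t. 0 < t \<Longrightarrow> t < d \<Longrightarrow> \<bar>tailint n i \<zeta> t - L\<bar> < \<eta> \<and> \<bar>t ^ (n - i) * \<zeta> t\<bar> < \<eta>"
    by (auto simp: eventually_at_right_field dist_real_def)
  define \<delta> where "\<delta> = min (d / 2) R"
  have \<delta>: "0 < \<delta>" "\<delta> < d" "\<delta> \<le> R" using d R by (auto simp: \<delta>_def)
  define g where "g t = (if t \<le> \<delta> then \<zeta> \<delta> else \<zeta> t)" for t
  define \<phi> where "\<phi> t = (if t \<le> 0 then 0 else g t)" for t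
  have zc: "continuous_on {0<..} \<zeta>" by (rule DniR_cont[OF z])
  have gc: "continuous_on {0..} g"
  proof -
    have "continuous_on ({0..\<delta>} \<union> {\<delta>..}) (\<lambda>t. if t \<le> \<delta> then \<zeta> \<delta> else \<zeta> t)"
      by (rule continuous_on_cases) (use \<delta> in \<open>auto intro!: continuous_on_subset[OF zc]\<close>)
    moreover have "{0..\<delta>} \<union> {\<delta>..} = {0::real..}" using \<delta> by auto
    ultimately show ?thesis by (simp add: g_def)
  qed
  have phig: "\<phi> t = g t" if "t > 0" for t using that by (simp add: \<phi>_def)
  have phiz: "\<phi> t = \<zeta> t" if "t \<ge> \<delta>" for t using that \<delta> by (auto simp: \<phi>_def g_def)
  have phid: "\<phi> t = \<zeta> \<delta>" if "0 < t" "t \<le> \<delta>" for t using that by (auto simp: \<phi>_def g_def)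
  have phisupp: "\<phi> t = 0" if "t > R" for t using that \<delta> phiz DniR_supp[OF z that] by auto
  have phicont: "continuous_on {0<..} \<phi>"
  proof -
    have "continuous_on {0<..} g" by (rule continuous_on_subset[OF gc]) auto
    then show ?thesis by (rule continuous_on_eq) (simp add: phig)
  qed
  have phiCb: "\<phi> \<in> Cb"
  proof -
    have "\<forall>t>R. \<phi> t = 0" using phisupp by blast
    moreover have "\<forall>t\<le>0. \<phi> t = 0" by (simp add: \<phi>_def)
    ultimately show ?thesis unfolding Cb_def using phicont by blast
  qed
  have phiCc: "\<phi> \<in> Cc0"
    unfolding Cc0_def mem_Collect_eq
  proof (intro exI[of _ g] conjI exI[of _ "R + 1"])
    show "continuous_on {0..} g" by (rule gc)
    show "\<forall>t\<ge>R + 1. g t = 0"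
    proof (intro allI impI)
      fix t :: real assume "t \<ge> R + 1"
      then have "t > R" "t > 0" using R by auto
      then show "g t = 0" using phisupp phig by metis
    qed
    show "\<forall>t>0. \<phi> t = g t" using phig by blast
  qed
  define J where "J t = integral {t..\<delta>} (\<lambda>s. s ^ (n - i - 1))" for t
  have Tphi_far: "tailint n i \<phi> t = tailint n i \<zeta> t" if "t \<ge> \<delta>" for t
    unfolding tailint_def by (rule integral_cong) (use that phiz in auto)
  have Tphi: "tailint n i \<phi> t = tailint n i \<zeta> \<delta> + \<zeta> \<delta> * J t" if t: "0 < t" "t \<le> \<delta>" for t
  proof -
    have "tailint n i \<phi> t = integral {t..\<delta>} (\<lambda>s. \<phi> s * s ^ (n - i - 1)) + tailint n i \<phi> \<delta>"
      by (rule tail_split[OF phiCb _ t \<delta>(3)]) (use phisupp in auto)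
    also have "integral {t..\<delta>} (\<lambda>s. \<phi> s * s ^ (n - i - 1)) = integral {t..\<delta>} (\<lambda>s. \<zeta> \<delta> * s ^ (n - i - 1))"
      by (rule integral_cong) (use t phid in auto)
    also have "\<dots> = \<zeta> \<delta> * J t" by (simp add: J_def)
    finally show ?thesis using Tphi_far[of \<delta>] by simp
  qed
  have Jb: "\<bar>J t\<bar> \<le> \<delta> ^ (n - i)" if t: "0 < t" "t \<le> \<delta>" for t
  proof -
    have "norm (J t) \<le> \<delta> ^ (n - i - 1) * (\<delta> - t)"
      unfolding J_def
    proof (rule integral_bound[OF t(2)])
      show "continuous_on {t..\<delta>} (\<lambda>s. s ^ (n - i - 1))" by (intro continuous_intros)
      fix s assume "s \<in> {t..\<delta>}"
      then show "norm (s ^ (n - i - 1)) \<le> \<delta> ^ (n - i - 1)" using t by (auto intro!: power_mono)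
    qed
    also have "\<dots> \<le> \<delta> ^ (n - i - 1) * \<delta>" using t \<delta> by (intro mult_left_mono) auto
    also have "\<dots> = \<delta> ^ (n - i)"
    proof -
      have "n - i = Suc (n - i - 1)" using m by simp
      then have "\<delta> ^ (n - i) = \<delta> ^ Suc (n - i - 1)" by (rule arg_cong)
      then show ?thesis by (simp only: power_Suc2)
    qed
    finally show ?thesis by simp
  qed
  have Jlim: "(J \<longlongrightarrow> J 0) (at_right 0)"
  proof -
    have "continuous_on {0..\<delta>} J"
      unfolding J_def
      by (intro indefinite_integral_continuous_1' integrable_continuous_real continuous_intros)
    then have "(J \<longlongrightarrow> J 0) (at 0 within {0..\<delta>})" using \<delta> by (auto simp: continuous_on_def)
    then show ?thesis using at_within_Icc_at_right[OF \<delta>(1)] by simp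
  qed
  have phiD: "\<phi> \<in> DniR n i R"
  proof -
    have T0: "((\<lambda>t. tailint n i \<zeta> \<delta> + \<zeta> \<delta> * J t) \<longlongrightarrow> tailint n i \<zeta> \<delta> + \<zeta> \<delta> * J 0) (at_right 0)"
      by (intro tendsto_intros Jlim)
    have ev1: "\<forall>\<^sub>F t in at_right 0. tailint n i \<zeta> \<delta> + \<zeta> \<delta> * J t = tailint n i \<phi> t"
      unfolding eventually_at_right_field
    proof (intro exI[of _ \<delta>] conjI allI impI)
      show "0 < \<delta>" by (rule \<delta>(1))
      fix t :: real assume "0 < t" "t < \<delta>"
      then show "tailint n i \<zeta> \<delta> + \<zeta> \<delta> * J t = tailint n i \<phi> t" using Tphi[of t] by simp
    qed
    have T: "(tailint n i \<phi> \<longlongrightarrow> tailint n i \<zeta> \<delta> + \<zeta> \<delta> * J 0) (at_right 0)"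
      by (rule Lim_transform_eventually[OF T0 ev1])
    have "((\<lambda>t. t ^ (n - i) * \<zeta> \<delta>) \<longlongrightarrow> 0 ^ (n - i) * \<zeta> \<delta>) (at_right 0)"
      by (intro tendsto_intros)
    moreover have "(0::real) ^ (n - i) * \<zeta> \<delta> = 0" using m by simp
    ultimately have P0: "((\<lambda>t. t ^ (n - i) * \<zeta> \<delta>) \<longlongrightarrow> 0) (at_right 0)" by simp
    have ev2: "\<forall>\<^sub>F t in at_right 0. t ^ (n - i) * \<zeta> \<delta> = t ^ (n - i) * \<phi> t"
      unfolding eventually_at_right_field
    proof (intro exI[of _ \<delta>] conjI allI impI)
      show "0 < \<delta>" by (rule \<delta>(1))
      fix t :: real assume "0 < t" "t < \<delta>"
      then show "t ^ (n - i) * \<zeta> \<delta> = t ^ (n - i) * \<phi> t" using phid[of t] by simp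
    qed
    have P: "((\<lambda>t. t ^ (n - i) * \<phi> t) \<longlongrightarrow> 0) (at_right 0)"
      by (rule Lim_transform_eventually[OF P0 ev2])
    show ?thesis unfolding DniR_def Dni_def mem_Collect_eq using phiCb T P phisupp by blast
  qed
  have zdb: "\<bar>\<zeta> \<delta>\<bar> * \<delta> ^ (n - i) < \<eta>"
    using dP[OF \<delta>(1,2)] \<delta>(1) by (simp add: abs_mult mult.commute)
  have "dnorm n i (\<lambda>t. \<zeta> t - \<phi> t) \<le> 3 * real (n - i) * \<eta> + (2 * \<eta> + 3 * real (n - i) * \<eta>)"
  proof (rule dn_le)
    fix t :: real assume t: "t > 0"
    have eq: "tailint n i (\<lambda>t. \<zeta> t - \<phi> t) t = tailint n i \<zeta> t - tailint n i \<phi> t"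
      by (rule tailint_diff[OF DniR_Cb[OF z] phiCb t])
    have both: "\<bar>tailint n i (\<lambda>t. \<zeta> t - \<phi> t) t\<bar> \<le> 3 * \<eta> \<and> \<bar>t ^ (n - i) * (\<zeta> t - \<phi> t)\<bar> \<le> 2 * \<eta>"
    proof (cases "t \<le> \<delta>")
      case False
      then show ?thesis using eq Tphi_far[of t] phiz[of t] \<eta> by simp
    next
      case True
      have tz: "tailint n i \<zeta> t = integral {t..\<delta>} (\<lambda>s. \<zeta> s * s ^ (n - i - 1)) + tailint n i \<zeta> \<delta>"
        by (rule tail_split[OF DniR_Cb[OF z] _ t True \<delta>(3)]) (use DniR_supp[OF z] in auto)
      have a1: "\<bar>tailint n i \<zeta> t - L\<bar> < \<eta>" and a2: "\<bar>t ^ (n - i) * \<zeta> t\<bar> < \<eta>"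
        using dP[of t] t True \<delta> by auto
      have a3: "\<bar>tailint n i \<zeta> \<delta> - L\<bar> < \<eta>" using dP[OF \<delta>(1,2)] by auto
      have a4: "\<bar>\<zeta> \<delta> * J t\<bar> \<le> \<eta>"
      proof -
        have "\<bar>\<zeta> \<delta> * J t\<bar> = \<bar>\<zeta> \<delta>\<bar> * \<bar>J t\<bar>" by (simp add: abs_mult)
        also have "\<dots> \<le> \<bar>\<zeta> \<delta>\<bar> * \<delta> ^ (n - i)" by (intro mult_left_mono Jb t True) auto
        finally show ?thesis using zdb by simp
      qed
      have "tailint n i (\<lambda>t. \<zeta> t - \<phi> t) t = (tailint n i \<zeta> t - L) - (tailint n i \<zeta> \<delta> - L) - \<zeta> \<delta> * J t"
        using eq Tphi[OF t True] by simp
      then have b1: "\<bar>tailint n i (\<lambda>t. \<zeta> t - \<phi> t) t\<bar> \<le> 3 * \<eta>"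
        using a1 a3 a4 by linarith
      have tp: "t ^ (n - i) \<le> \<delta> ^ (n - i)" using t True by (intro power_mono) auto
      have "\<bar>t ^ (n - i) * \<zeta> \<delta>\<bar> = t ^ (n - i) * \<bar>\<zeta> \<delta>\<bar>" using t by (simp add: abs_mult)
      also have "\<dots> \<le> \<delta> ^ (n - i) * \<bar>\<zeta> \<delta>\<bar>" using tp by (intro mult_right_mono) auto
      finally have a5: "\<bar>t ^ (n - i) * \<zeta> \<delta>\<bar> < \<eta>" using zdb by (simp add: mult.commute)
      have "t ^ (n - i) * (\<zeta> t - \<phi> t) = t ^ (n - i) * \<zeta> t - t ^ (n - i) * \<zeta> \<delta>"
        using phid[OF t True] by (simp add: right_diff_distrib)
      then have b2: "\<bar>t ^ (n - i) * (\<zeta> t - \<phi> t)\<bar> \<le> 2 * \<eta>" using a2 a5 by linarith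
      show ?thesis using b1 b2 by simp
    qed
    have r1: "\<bar>real (n - i) * tailint n i (\<lambda>t. \<zeta> t - \<phi> t) t\<bar> \<le> real (n - i) * (3 * \<eta>)"
      using both by (simp add: abs_mult mult_left_mono)
    then show "\<bar>real (n - i) * tailint n i (\<lambda>t. \<zeta> t - \<phi> t) t\<bar> \<le> 3 * real (n - i) * \<eta>" by simp
    show "\<bar>t ^ (n - i) * (\<zeta> t - \<phi> t) + real (n - i) * tailint n i (\<lambda>t. \<zeta> t - \<phi> t) t\<bar> \<le> 2 * \<eta> + 3 * real (n - i) * \<eta>"
      using both r1 abs_triangle_ineq[of "t ^ (n - i) * (\<zeta> t - \<phi> t)" "real (n - i) * tailint n i (\<lambda>t. \<zeta> t - \<phi> t) t"]
      by simp
  qed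
  also have "\<dots> < e" unfolding e\<eta> using \<eta> by (simp add: algebra_simps)
  finally show ?thesis using phiCc phiD by blast
qed

theorem lemma2p7:
  fixes n i :: nat and R :: real
  assumes "n \<ge> 2" and "1 \<le> i" and "i \<le> n - 1" and "R > 0"
  shows
    \<comment> \<open>D is a real vector space\<close>
    "(\<lambda>t. 0) \<in> DniR n i R
     \<and> (\<forall>f\<in>DniR n i R. \<forall>g\<in>DniR n i R. (\<lambda>t. f t + g t) \<in> DniR n i R)
     \<and> (\<forall>f\<in>DniR n i R. \<forall>c::real. (\<lambda>t. c * f t) \<in> DniR n i R)
     \<comment> \<open>dnorm is a norm on it\<close>
     \<and> (\<forall>f\<in>DniR n i R. 0 \<le> dnorm n i f \<and> (dnorm n i f = 0 \<longleftrightarrow> f = (\<lambda>t. 0)))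
     \<and> (\<forall>f\<in>DniR n i R. \<forall>c::real. dnorm n i (\<lambda>t. c * f t) = \<bar>c\<bar> * dnorm n i f)
     \<and> (\<forall>f\<in>DniR n i R. \<forall>g\<in>DniR n i R.
          dnorm n i (\<lambda>t. f t + g t) \<le> dnorm n i f + dnorm n i g)
     \<comment> \<open>completeness\<close>
     \<and> (\<forall>X :: nat \<Rightarrow> real \<Rightarrow> real. (\<forall>k. X k \<in> DniR n i R) \<longrightarrow>
          (\<forall>e>0. \<exists>N. \<forall>m\<ge>N. \<forall>k\<ge>N. dnorm n i (\<lambda>t. X m t - X k t) < e) \<longrightarrow>
          (\<exists>\<zeta>\<in>DniR n i R. (\<lambda>k. dnorm n i (\<lambda>t. X k t - \<zeta> t)) \<longlonglongrightarrow> 0))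
     \<comment> \<open>density of C_c([0,infinity)) \<inter> D, i.e. D is its completion\<close>
     \<and> (\<forall>\<zeta>\<in>DniR n i R. \<forall>e>0. \<exists>\<phi>\<in>Cc0 \<inter> DniR n i R. dnorm n i (\<lambda>t. \<zeta> t - \<phi> t) < e)"
proof -
  have m: "i < n" using assms by linarith
  have c1: "\<forall>X :: nat \<Rightarrow> real \<Rightarrow> real. (\<forall>k. X k \<in> DniR n i R) \<longrightarrow>
          (\<forall>e>0. \<exists>N. \<forall>m\<ge>N. \<forall>k\<ge>N. dnorm n i (\<lambda>t. X m t - X k t) < e) \<longrightarrow>
          (\<exists>\<zeta>\<in>DniR n i R. (\<lambda>k. dnorm n i (\<lambda>t. X k t - \<zeta> t)) \<longlonglongrightarrow> 0)"
  proof (intro allI impI)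
    fix X :: "nat \<Rightarrow> real \<Rightarrow> real"
    assume X: "\<forall>k. X k \<in> DniR n i R"
      and C: "\<forall>e>0. \<exists>N. \<forall>m\<ge>N. \<forall>k\<ge>N. dnorm n i (\<lambda>t. X m t - X k t) < e"
    show "\<exists>\<zeta>\<in>DniR n i R. (\<lambda>k. dnorm n i (\<lambda>t. X k t - \<zeta> t)) \<longlonglongrightarrow> 0"
      by (rule completeness[OF m]) (use X C in blast)+
  qed
  have c2: "\<forall>\<zeta>\<in>DniR n i R. \<forall>e>0. \<exists>\<phi>\<in>Cc0 \<inter> DniR n i R. dnorm n i (\<lambda>t. \<zeta> t - \<phi> t) < e"
    using density[OF m assms(4)] by blast
  have c3: "\<forall>f\<in>DniR n i R. 0 \<le> dnorm n i f \<and> (dnorm n i f = 0 \<longleftrightarrow> f = (\<lambda>t. 0))"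
  proof
    fix f assume f: "f \<in> DniR n i R"
    show "0 \<le> dnorm n i f \<and> (dnorm n i f = 0 \<longleftrightarrow> f = (\<lambda>t. 0))"
    proof (intro conjI iffI)
      show "0 \<le> dnorm n i f" by (rule dn_nonneg[OF f])
      show "dnorm n i f = 0 \<Longrightarrow> f = (\<lambda>t. 0)" by (rule dn_eq0[OF f])
      show "f = (\<lambda>t. 0) \<Longrightarrow> dnorm n i f = 0" using dn_zero by simp
    qed
  qed
  have c4: "\<forall>f\<in>DniR n i R. \<forall>g\<in>DniR n i R. (\<lambda>t. f t + g t) \<in> DniR n i R"
    using DniR_add by blast
  have c5: "\<forall>f\<in>DniR n i R. \<forall>c::real. (\<lambda>t. c * f t) \<in> DniR n i R"
    using DniR_scale by blast
  have c6: "\<forall>f\<in>DniR n i R. \<forall>c::real. dnorm n i (\<lambda>t. c * f t) = \<bar>c\<bar> * dnorm n i f"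
    using dn_scale by blast
  have c7: "\<forall>f\<in>DniR n i R. \<forall>g\<in>DniR n i R. dnorm n i (\<lambda>t. f t + g t) \<le> dnorm n i f + dnorm n i g"
    using dn_triangle by blast
  show ?thesis
    using DniR_zero c1 c2 c3 c4 c5 c6 c7 by (intro conjI) assumption+
qed

end
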